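(* For every unweighted congestion game $\mathcal{G}$ with quadratic latency functions, $\mathrm{PoS}(\mathcal{G})\le 2.362$.
   Context: A weighted congestion game consists of a finite set $[n]=\{1,\dots,n\}$ of players, a finite set $E$ of resources, for each player $i$ a weight $w_i>0$ and a nonempty finite strategy set $\Sigma_i\subseteq 2^E$, and for each resource $e$ a latency function $\ell_e:\mathbb{R}_{\ge 0}\to\mathbb{R}_{\ge 0}$. It is unweighted if $w_i=1$ for all $i$. Quadratic latency functions means $\ell_e(x)=\sum_{j=0}^{2}\alpha_{e,j}x^j$ with all $\alpha_{e,j}\ge 0$. For a strategy profile $S=(s_1,\dots,s_n)$, the congestion of $e$ is $L_e(S)=\sum_{i:\,e\in s_i}w_i$, the cost of player $i$ is $c_i(S)=\sum_{e\in s_i}\ell_e(L_e(S))$, and $\mathrm{SUM}(S)=\sum_i c_i(S)$; $S^*$ minimizes $\mathrm{SUM}$. A pure Nash equilibrium (PNE) is a profile $S$ with $c_i(S)\le c_i(S_{-i}\diamond t)$ for all $i$ and $t\in\Sigma_i$, where $(S_{-i}\diamond t)$ replaces $s_i$ by $t$. $\mathrm{PoS}(\mathcal{G})=\min_{S\ \mathrm{PNE}}\mathrm{SUM}(S)/\mathrm{SUM}(S^* )$. *)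

theory Defs
  imports Main Complex_Main
begin

text \<open>A strategy profile is a function S from players to strategies
(only the values on 1..n matter).\<close>

definition congestion_game :: "nat \<Rightarrow> 'e set \<Rightarrow> (nat \<Rightarrow> 'e set set) \<Rightarrow> bool" where
  "congestion_game n E Strat \<longleftrightarrow> finite E \<and>
     (\<forall>i\<in>{1..n}. Strat i \<noteq> {} \<and> finite (Strat i) \<and> Strat i \<subseteq> Pow E)"

definition quadratic_latencies :: "'e set \<Rightarrow> ('e \<Rightarrow> real \<Rightarrow> real) \<Rightarrow> bool" where
  "quadratic_latencies E l \<longleftrightarrow>
     (\<forall>e\<in>E. \<exists>a0 a1 a2::real. a0 \<ge> 0 \<and> a1 \<ge> 0 \<and> a2 \<ge> 0 \<and>
        (\<forall>x\<ge>0. l e x = a0 + a1 * x + a2 * x ^ 2))"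

definition is_profile :: "nat \<Rightarrow> (nat \<Rightarrow> 'e set set) \<Rightarrow> (nat \<Rightarrow> 'e set) \<Rightarrow> bool" where
  "is_profile n Strat S \<longleftrightarrow> (\<forall>i\<in>{1..n}. S i \<in> Strat i)"

definition congestion :: "nat \<Rightarrow> (nat \<Rightarrow> 'e set) \<Rightarrow> 'e \<Rightarrow> real" where
  "congestion n S e = real (card {i\<in>{1..n}. e \<in> S i})"

definition player_cost :: "nat \<Rightarrow> ('e \<Rightarrow> real \<Rightarrow> real) \<Rightarrow> (nat \<Rightarrow> 'e set) \<Rightarrow> nat \<Rightarrow> real" where
  "player_cost n l S i = (\<Sum>e\<in>S i. l e (congestion n S e))"

definition social_cost :: "nat \<Rightarrow> ('e \<Rightarrow> real \<Rightarrow> real) \<Rightarrow> (nat \<Rightarrow> 'e set) \<Rightarrow> real" where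
  "social_cost n l S = (\<Sum>i\<in>{1..n}. player_cost n l S i)"

definition is_PNE :: "nat \<Rightarrow> (nat \<Rightarrow> 'e set set) \<Rightarrow> ('e \<Rightarrow> real \<Rightarrow> real) \<Rightarrow> (nat \<Rightarrow> 'e set) \<Rightarrow> bool" where
  "is_PNE n Strat l S \<longleftrightarrow> is_profile n Strat S \<and>
     (\<forall>i\<in>{1..n}. \<forall>t\<in>Strat i. player_cost n l S i \<le> player_cost n l (S(i := t)) i)"

definition opt_cost :: "nat \<Rightarrow> (nat \<Rightarrow> 'e set set) \<Rightarrow> ('e \<Rightarrow> real \<Rightarrow> real) \<Rightarrow> real" where
  "opt_cost n Strat l = Min {social_cost n l S | S. is_profile n Strat S}"

definition PoS :: "nat \<Rightarrow> (nat \<Rightarrow> 'e set set) \<Rightarrow> ('e \<Rightarrow> real \<Rightarrow> real) \<Rightarrow> real" where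
  "PoS n Strat l = Min {social_cost n l S / opt_cost n Strat l | S. is_PNE n Strat l S}"

end

theory Submission imports Defs "HOL-Library.FuncSet" begin

definition cnt :: "nat \<Rightarrow> (nat \<Rightarrow> 'e set) \<Rightarrow> 'e \<Rightarrow> nat" where
  "cnt n S e = card {i\<in>{1..n}. e \<in> S i}"

lemma congestion_cnt: "congestion n S e = real (cnt n S e)"
  by (simp add: congestion_def cnt_def)

definition pot :: "('e \<Rightarrow> real \<Rightarrow> real) \<Rightarrow> 'e \<Rightarrow> nat \<Rightarrow> real" where
  "pot l e m = (\<Sum>k\<in>{1..m}. l e (real k))"

definition Phi :: "nat \<Rightarrow> 'e set \<Rightarrow> ('e \<Rightarrow> real \<Rightarrow> real) \<Rightarrow> (nat \<Rightarrow> 'e set) \<Rightarrow> real" where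
  "Phi n E l S = (\<Sum>e\<in>E. pot l e (cnt n S e))"

lemma cnt_split:
  assumes "i \<in> {1..n}"
  shows "cnt n S e = card {j\<in>{1..n}. j \<noteq> i \<and> e \<in> S j} + (if e \<in> S i then 1 else 0)"
proof (cases "e \<in> S i")
  case True
  have "{j\<in>{1..n}. e \<in> S j} = insert i {j\<in>{1..n}. j \<noteq> i \<and> e \<in> S j}"
    using True assms by auto
  then show ?thesis using True by (simp add: cnt_def)
next
  case False
  have "{j\<in>{1..n}. e \<in> S j} = {j\<in>{1..n}. j \<noteq> i \<and> e \<in> S j}"
    using False assms by auto
  then show ?thesis using False by (simp add: cnt_def)
qed

lemma cnt_upd:
  assumes "i \<in> {1..n}"
  shows "cnt n (S(i:=t)) e = card {j\<in>{1..n}. j \<noteq> i \<and> e \<in> S j} + (if e \<in> t then 1 else 0)"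
proof -
  have "{j\<in>{1..n}. j \<noteq> i \<and> e \<in> (S(i:=t)) j} = {j\<in>{1..n}. j \<noteq> i \<and> e \<in> S j}" by auto
  then show ?thesis using cnt_split[OF assms, of "S(i:=t)" e] by simp
qed

lemma pot_Suc: "pot l e (Suc m) = pot l e m + l e (real (Suc m))"
  by (simp add: pot_def)

lemma pot_diff:
  assumes "i \<in> {1..n}"
  shows "pot l e (cnt n (S(i:=t)) e) - pot l e (cnt n S e) =
     (if e \<in> t then l e (real (cnt n (S(i:=t)) e)) else 0) - (if e \<in> S i then l e (real (cnt n S e)) else 0)"
  unfolding cnt_upd[OF assms] cnt_split[OF assms, of S e]
  by (cases "e \<in> t"; cases "e \<in> S i") (simp_all add: pot_Suc)

lemma Phi_diff:
  assumes "finite E" "i \<in> {1..n}" "S i \<subseteq> E" "t \<subseteq> E"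
  shows "Phi n E l (S(i:=t)) - Phi n E l S = player_cost n l (S(i:=t)) i - player_cost n l S i"
proof -
  have "Phi n E l (S(i:=t)) - Phi n E l S = (\<Sum>e\<in>E. pot l e (cnt n (S(i:=t)) e) - pot l e (cnt n S e))"
    by (simp add: Phi_def sum_subtractf)
  also have "\<dots> = (\<Sum>e\<in>E. (if e \<in> t then l e (real (cnt n (S(i:=t)) e)) else 0))
      - (\<Sum>e\<in>E. (if e \<in> S i then l e (real (cnt n S e)) else 0))"
    by (simp add: pot_diff[OF assms(2)] sum_subtractf)
  also have "(\<Sum>e\<in>E. (if e \<in> t then l e (real (cnt n (S(i:=t)) e)) else 0)) = (\<Sum>e\<in>E \<inter> t. l e (real (cnt n (S(i:=t)) e)))"
    using assms(1) by (simp add: sum.inter_restrict)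
  also have "E \<inter> t = t" using assms(4) by auto
  also have "(\<Sum>e\<in>E. (if e \<in> S i then l e (real (cnt n S e)) else 0)) = (\<Sum>e\<in>E \<inter> S i. l e (real (cnt n S e)))"
    using assms(1) by (simp add: sum.inter_restrict)
  also have "E \<inter> S i = S i" using assms(3) by auto
  finally have X: "Phi n E l (S(i:=t)) - Phi n E l S = (\<Sum>e\<in>t. l e (real (cnt n (S(i:=t)) e))) - (\<Sum>e\<in>S i. l e (real (cnt n S e)))" .
  have "player_cost n l (S(i:=t)) i = (\<Sum>e\<in>t. l e (real (cnt n (S(i:=t)) e)))"
    unfolding player_cost_def congestion_cnt fun_upd_same ..
  moreover have "player_cost n l S i = (\<Sum>e\<in>S i. l e (real (cnt n S e)))"
    unfolding player_cost_def congestion_cnt ..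
  ultimately show ?thesis using X by linarith
qed

lemma exchange:
  assumes "finite E" "\<forall>i\<in>{1..n}. S i \<subseteq> E"
  shows "(\<Sum>i\<in>{1..n}. \<Sum>e\<in>S i. f e) = (\<Sum>e\<in>E. real (cnt n S e) * f e)"
proof -
  have "(\<Sum>i\<in>{1..n}. \<Sum>e\<in>S i. f e) = (\<Sum>i\<in>{1..n}. \<Sum>e\<in>E. if e \<in> S i then f e else 0)"
  proof (rule sum.cong[OF refl])
    fix i assume "i \<in> {1..n}"
    then have "E \<inter> S i = S i" using assms(2) by auto
    then show "(\<Sum>e\<in>S i. f e) = (\<Sum>e\<in>E. if e \<in> S i then f e else 0)"
      using assms(1) sum.inter_restrict[of E f "S i"] by simp
  qed
  also have "\<dots> = (\<Sum>e\<in>E. \<Sum>i\<in>{1..n}. if e \<in> S i then f e else 0)" by (rule sum.swap)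
  also have "\<dots> = (\<Sum>e\<in>E. real (cnt n S e) * f e)"
  proof (rule sum.cong[OF refl])
    fix e
    have "(\<Sum>i\<in>{i\<in>{1..n}. e \<in> S i}. f e) = (\<Sum>i\<in>{1..n}. if e \<in> S i then f e else 0)"
      by (rule sum.inter_filter) simp
    then have "(\<Sum>i\<in>{1..n}. if e \<in> S i then f e else 0) = (\<Sum>i\<in>{i\<in>{1..n}. e \<in> S i}. f e)" by simp
    also have "\<dots> = real (cnt n S e) * f e" by (simp add: cnt_def)
    finally show "(\<Sum>i\<in>{1..n}. if e \<in> S i then f e else 0) = real (cnt n S e) * f e" .
  qed
  finally show ?thesis .
qed

lemma social_cost_res:
  assumes "finite E" "\<forall>i\<in>{1..n}. S i \<subseteq> E"
  shows "social_cost n l S = (\<Sum>e\<in>E. real (cnt n S e) * l e (real (cnt n S e)))"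
  unfolding social_cost_def player_cost_def congestion_cnt
  by (rule exchange[OF assms])

lemma cnt_restrict: "cnt n (restrict S {1..n}) e = cnt n S e"
  unfolding cnt_def by (rule arg_cong[where f=card]) (auto simp: restrict_def)

lemma player_cost_restrict: "i \<in> {1..n} \<Longrightarrow> player_cost n l (restrict S {1..n}) i = player_cost n l S i"
  unfolding player_cost_def congestion_cnt cnt_restrict by simp

lemma social_cost_restrict: "social_cost n l (restrict S {1..n}) = social_cost n l S"
  unfolding social_cost_def by (rule sum.cong[OF refl]) (rule player_cost_restrict)

lemma Phi_restrict: "Phi n E l (restrict S {1..n}) = Phi n E l S"
  unfolding Phi_def cnt_restrict ..

definition "rA = (4535/10000::real)"
definition "rB = (19085/10000::real)"
definition "rR = (2362/1000::real)"

definition H1 :: "real \<Rightarrow> real \<Rightarrow> real" where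
  "H1 x y = (1-rA)*x^2 + rA*y*(x+1) - rB*(x*(x+1)/2 - y*(y+1)/2) - rR*y^2"
definition H2 :: "real \<Rightarrow> real \<Rightarrow> real" where
  "H2 x y = (1-rA)*x^3 + rA*y*(x+1)^2 - rB*(x*(x+1)*(2*x+1)/6 - y*(y+1)*(2*y+1)/6) - rR*y^3"

lemma H2_box:
  fixes p q :: real assumes "p \<ge> 0" "q \<ge> 0"
  shows "H2 (p+1) (q+1) \<le> 0"
proof -
  have id: "- H2 (p+1) (q+1)
    = (p - 843/250*q)^2 * (269/3000*p + 37803/250000*q) + 14331/62500000*p*q^2 + 304445059/46875000000*q^3
      + 3079/4000*(p - 3628/3079*q)^2 + 38851163/12316000*q^2 + 13643/12000*q + 8179/12000*p + 3/2000"
    unfolding H2_def rA_def rB_def rR_def by (simp add: field_simps power2_eq_square power3_eq_cube)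
  have "0 \<le> (p - 843/250*q)^2 * (269/3000*p + 37803/250000*q) + 14331/62500000*p*q^2 + 304445059/46875000000*q^3
      + 3079/4000*(p - 3628/3079*q)^2 + 38851163/12316000*q^2 + 13643/12000*q + 8179/12000*p + 3/2000"
    using assms by (intro add_nonneg_nonneg mult_nonneg_nonneg) (auto simp: power2_eq_square)
  then show ?thesis using id by linarith
qed

lemma H1_box:
  fixes p q :: real assumes "p \<ge> 0" "q \<ge> 0"
  shows "H1 (p+1) (q+1) \<le> 0"
proof -
  have id: "- H1 (p+1) (q+1)
    = 1631/4000*(p - 907/1631*q)^2 + (5631/4000 - 1631/4000*(907/1631)^2)*q^2 + 3817/4000*q + 1817/2000 + 1053/800*p"
    unfolding H1_def rA_def rB_def rR_def by (simp add: field_simps power2_eq_square)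
  have "0 \<le> 1631/4000*(p - 907/1631*q)^2 + (5631/4000 - 1631/4000*(907/1631)^2)*q^2 + 3817/4000*q + 1817/2000 + 1053/800*p"
    using assms by (intro add_nonneg_nonneg mult_nonneg_nonneg) (auto simp: power2_eq_square)
  then show ?thesis using id by linarith
qed

lemma H2_x0: fixes q :: real assumes "q \<ge> 0" shows "H2 0 (q+1) \<le> 0"
proof -
  have id: "- H2 0 (q+1) = 2071/1200*q^3 + 16893/4000*q^2 + 29969/12000*q"
    unfolding H2_def rA_def rB_def rR_def by (simp add: field_simps power2_eq_square power3_eq_cube)
  have "0 \<le> 2071/1200*q^3 + 16893/4000*q^2 + 29969/12000*q" using assms by simp
  then show ?thesis using id by linarith
qed

lemma H1_x0: fixes q :: real assumes "q \<ge> 0" shows "H1 0 (q+1) \<le> 0"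
proof -
  have id: "- H1 0 (q+1) = 5631/4000*q^2 + 5631/4000*q"
    unfolding H1_def rA_def rB_def rR_def by (simp add: field_simps power2_eq_square)
  have "0 \<le> 5631/4000*q^2 + 5631/4000*q" using assms by simp
  then show ?thesis using id by linarith
qed

lemma H2_y0: fixes p :: real assumes "p \<ge> 0" shows "H2 p 0 \<le> 0"
proof -
  have id: "- H2 p 0 = 269/3000*p^3 + 3817/4000*p^2 + 3817/12000*p"
    unfolding H2_def rA_def rB_def rR_def by (simp add: field_simps power2_eq_square power3_eq_cube)
  have "0 \<le> 269/3000*p^3 + 3817/4000*p^2 + 3817/12000*p" using assms by simp
  then show ?thesis using id by linarith
qed

lemma H1_y0: fixes p :: real assumes "p \<ge> 0" shows "H1 p 0 \<le> 0"
proof -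
  have id: "- H1 p 0 = 1631/4000*p^2 + 3817/4000*p"
    unfolding H1_def rA_def rB_def rR_def by (simp add: field_simps power2_eq_square)
  have "0 \<le> 1631/4000*p^2 + 3817/4000*p" using assms by simp
  then show ?thesis using id by linarith
qed

lemma H_nat: fixes x y :: nat shows "H1 (real x) (real y) \<le> 0 \<and> H2 (real x) (real y) \<le> 0"
proof (cases "y = 0")
  case True then show ?thesis using H1_y0 H2_y0 by simp
next
  case False
  then have y: "real y = (real y - 1) + 1" "real y - 1 \<ge> 0" by auto
  show ?thesis
  proof (cases "x = 0")
    case True then show ?thesis using H1_x0[OF y(2)] H2_x0[OF y(2)] y(1) by simp
  next
    case False
    then have x: "real x = (real x - 1) + 1" "real x - 1 \<ge> 0" by auto
    show ?thesis using H1_box[OF x(2) y(2)] H2_box[OF x(2) y(2)] x(1) y(1) by simp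
  qed
qed

lemma resource:
  fixes x y :: nat and c0 c1 c2 :: real assumes "c0 \<ge> 0" "c1 \<ge> 0" "c2 \<ge> 0"
  shows "real x*(c0 + c1*real x + c2*real x^2) - rR*(real y*(c0+c1*real y + c2*real y^2))
    \<le> rA*(real x*(c0+c1*real x+c2*real x^2) - real y*(c0 + c1*(real x+1) + c2*(real x+1)^2))
      + rB*((c0*real x + c1*(real x*(real x+1)/2) + c2*(real x*(real x+1)*(2*real x+1)/6))
          - (c0*real y + c1*(real y*(real y+1)/2) + c2*(real y*(real y+1)*(2*real y+1)/6)))"
proof -
  define H0 where "H0 = (1-rA-rB)*real x + (rA+rB-rR)*real y"
  have id: "real x*(c0 + c1*real x + c2*real x^2) - rR*(real y*(c0+c1*real y + c2*real y^2))
    - (rA*(real x*(c0+c1*real x+c2*real x^2) - real y*(c0 + c1*(real x+1) + c2*(real x+1)^2))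
      + rB*((c0*real x + c1*(real x*(real x+1)/2) + c2*(real x*(real x+1)*(2*real x+1)/6))
          - (c0*real y + c1*(real y*(real y+1)/2) + c2*(real y*(real y+1)*(2*real y+1)/6))))
    = c0 * H0 + c1 * H1 (real x) (real y) + c2 * H2 (real x) (real y)"
    unfolding H0_def H1_def H2_def by (simp add: algebra_simps power2_eq_square power3_eq_cube)
  have "H0 \<le> 0" unfolding H0_def rA_def rB_def rR_def by simp
  then have "c0 * H0 + c1 * H1 (real x) (real y) + c2 * H2 (real x) (real y) \<le> 0"
    using H_nat[of x y] assms
    by (intro add_nonpos_nonpos mult_nonneg_nonpos) auto
  then show ?thesis using id by linarith
qed

lemma pot_closed:
  assumes "\<forall>x\<ge>0. l e x = ka + kb * x + kc * x ^ 2"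
  shows "pot l e m = ka*real m + kb*(real m*(real m+1)/2) + kc*(real m*(real m+1)*(2*real m+1)/6)"
proof (induction m)
  case 0 then show ?case by (simp add: pot_def)
next
  case (Suc m)
  have "l e (real (Suc m)) = ka + kb * real (Suc m) + kc * real (Suc m) ^ 2" using assms by simp
  then show ?case using Suc by (simp add: pot_Suc field_simps power2_eq_square)
qed

theorem mainTheorem9:
  fixes n :: nat and E :: "'e set" and Strat :: "nat \<Rightarrow> 'e set set"
    and l :: "'e \<Rightarrow> real \<Rightarrow> real"
  assumes "congestion_game n E Strat"
    and "quadratic_latencies E l"
  shows "PoS n Strat l \<le> 2.362"
proof -
  have finE: "finite E" and SE: "\<And>i. i\<in>{1..n} \<Longrightarrow> Strat i \<noteq> {} \<and> finite (Strat i) \<and> Strat i \<subseteq> Pow E"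
    using assms(1) unfolding congestion_game_def by auto
  have "\<forall>e\<in>E. \<exists>a0 a1 a2::real. a0 \<ge> 0 \<and> a1 \<ge> 0 \<and> a2 \<ge> 0 \<and> (\<forall>x\<ge>0. l e x = a0 + a1 * x + a2 * x ^ 2)"
    using assms(2) unfolding quadratic_latencies_def by blast
  then obtain c0 c1 c2 where cf: "\<And>e. e\<in>E \<Longrightarrow> c0 e \<ge> 0 \<and> c1 e \<ge> 0 \<and> c2 e \<ge> 0 \<and> (\<forall>x\<ge>0. l e x = c0 e + c1 e * x + c2 e * x ^ 2)"
    by metis
  have lmono: "l e u \<le> l e v" if "e \<in> E" "0 \<le> u" "u \<le> v" for e u v
  proof -
    have "c0 e + c1 e * u + c2 e * u^2 \<le> c0 e + c1 e * v + c2 e * v^2"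
      using cf[OF that(1)] that by (intro add_mono mult_left_mono power_mono) auto
    then show ?thesis using cf[OF that(1)] that by simp
  qed
  have lnn: "0 \<le> l e u" if "e \<in> E" "0 \<le> u" for e u
    using cf[OF that(1)] that by simp
  define PS where "PS = Pi\<^sub>E {1..n} Strat"
  have finPS: "finite PS" unfolding PS_def using SE by (intro finite_PiE) auto
  have nePS: "PS \<noteq> {}" unfolding PS_def using SE by (simp add: PiE_eq_empty_iff)
  have PS_prof: "is_profile n Strat S" if "S \<in> PS" for S
    using that unfolding PS_def is_profile_def by (auto dest: PiE_mem)
  have PS_sub: "\<forall>i\<in>{1..n}. S i \<subseteq> E" if "S \<in> PS" for S
  proof
    fix i assume i: "i \<in> {1..n}"
    have "S i \<in> Strat i" using that i unfolding PS_def by (rule PiE_mem)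
    then show "S i \<subseteq> E" using SE[OF i] by auto
  qed
  have PS_restrict: "restrict S {1..n} \<in> PS" if "is_profile n Strat S" for S
    using that unfolding PS_def is_profile_def by (simp add: restrict_PiE_iff)
  have PS_upd: "S(i:=t) \<in> PS" if "S \<in> PS" "i \<in> {1..n}" "t \<in> Strat i" for S i t
  proof -
    have "S(i:=t) \<in> Pi\<^sub>E (insert i {1..n}) Strat" using that unfolding PS_def by (intro PiE_fun_upd)
    then show ?thesis using that(2) unfolding PS_def by (simp add: insert_absorb)
  qed
  have "Min (Phi n E l ` PS) \<in> Phi n E l ` PS" using finPS nePS by (intro Min_in) auto
  then obtain S0 where S0: "S0 \<in> PS" "Phi n E l S0 = Min (Phi n E l ` PS)" by auto
  have S0min: "Phi n E l S0 \<le> Phi n E l S" if "S \<in> PS" for S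
    using S0(2) finPS that by simp
  have S0PNE: "is_PNE n Strat l S0"
    unfolding is_PNE_def
  proof (intro conjI ballI)
    show "is_profile n Strat S0" using PS_prof[OF S0(1)] .
    fix i t assume i: "i \<in> {1..n}" and t: "t \<in> Strat i"
    have "Phi n E l (S0(i:=t)) - Phi n E l S0 = player_cost n l (S0(i:=t)) i - player_cost n l S0 i"
      using Phi_diff[OF finE i] PS_sub[OF S0(1)] i t SE by blast
    moreover have "Phi n E l S0 \<le> Phi n E l (S0(i:=t))" using S0min PS_upd[OF S0(1) i t] by blast
    ultimately show "player_cost n l S0 i \<le> player_cost n l (S0(i:=t)) i" by linarith
  qed
  have OS: "{social_cost n l S | S. is_profile n Strat S} = social_cost n l ` PS"
  proof
    show "{social_cost n l S | S. is_profile n Strat S} \<subseteq> social_cost n l ` PS"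
    proof
      fix c assume "c \<in> {social_cost n l S | S. is_profile n Strat S}"
      then obtain S where "is_profile n Strat S" "c = social_cost n l S" by auto
      then show "c \<in> social_cost n l ` PS"
        using PS_restrict social_cost_restrict[of n l S] by (metis image_eqI)
    qed
    show "social_cost n l ` PS \<subseteq> {social_cost n l S | S. is_profile n Strat S}"
      using PS_prof by auto
  qed
  have "Min (social_cost n l ` PS) \<in> social_cost n l ` PS" using finPS nePS by (intro Min_in) auto
  then obtain Sopt where Sopt: "Sopt \<in> PS" "social_cost n l Sopt = opt_cost n Strat l"
    unfolding opt_cost_def OS by auto
  define x where "x e = cnt n S0 e" for e
  define y where "y e = cnt n Sopt e" for e
  have nash_i: "player_cost n l S0 i \<le> (\<Sum>e\<in>Sopt i. l e (real (x e) + 1))" if i: "i \<in> {1..n}" for i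
  proof -
    have t: "Sopt i \<in> Strat i" using Sopt(1) i unfolding PS_def by (auto dest: PiE_mem)
    have "player_cost n l S0 i \<le> player_cost n l (S0(i:=Sopt i)) i"
      using S0PNE i t unfolding is_PNE_def by blast
    also have "\<dots> = (\<Sum>e\<in>Sopt i. l e (real (cnt n (S0(i:=Sopt i)) e)))"
      unfolding player_cost_def congestion_cnt fun_upd_same ..
    also have "\<dots> \<le> (\<Sum>e\<in>Sopt i. l e (real (x e) + 1))"
    proof (rule sum_mono)
      fix e assume e: "e \<in> Sopt i"
      have eE: "e \<in> E" using e PS_sub[OF Sopt(1)] i by auto
      have "cnt n (S0(i:=Sopt i)) e \<le> cnt n S0 e + 1"
        unfolding cnt_upd[OF i] cnt_split[OF i, of S0 e] by simp
      then have "real (cnt n (S0(i:=Sopt i)) e) \<le> real (x e) + 1" unfolding x_def by linarith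
      then show "l e (real (cnt n (S0(i:=Sopt i)) e)) \<le> l e (real (x e) + 1)"
        using lmono[OF eE] by simp
    qed
    finally show ?thesis .
  qed
  have nash: "social_cost n l S0 \<le> (\<Sum>e\<in>E. real (y e) * l e (real (x e) + 1))"
  proof -
    have "social_cost n l S0 \<le> (\<Sum>i\<in>{1..n}. \<Sum>e\<in>Sopt i. l e (real (x e) + 1))"
      unfolding social_cost_def by (rule sum_mono) (rule nash_i)
    also have "\<dots> = (\<Sum>e\<in>E. real (y e) * l e (real (x e) + 1))"
      unfolding y_def by (rule exchange[OF finE PS_sub[OF Sopt(1)]])
    finally show ?thesis .
  qed
  have res: "real (x e) * l e (real (x e)) - rR * (real (y e) * l e (real (y e)))
      \<le> rA * (real (x e) * l e (real (x e)) - real (y e) * l e (real (x e) + 1))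
        + rB * (pot l e (x e) - pot l e (y e))" if eE: "e \<in> E" for e
  proof -
    have c: "c0 e \<ge> 0" "c1 e \<ge> 0" "c2 e \<ge> 0" and lp: "\<forall>u\<ge>0. l e u = c0 e + c1 e * u + c2 e * u ^ 2"
      using cf[OF eE] by auto
    have "l e (real (x e)) = c0 e + c1 e * real (x e) + c2 e * real (x e) ^ 2"
         "l e (real (y e)) = c0 e + c1 e * real (y e) + c2 e * real (y e) ^ 2"
         "l e (real (x e) + 1) = c0 e + c1 e * (real (x e) + 1) + c2 e * (real (x e) + 1) ^ 2"
      using lp by auto
    moreover note pot_closed[where l=l and e=e and ka="c0 e" and kb="c1 e" and kc="c2 e", OF lp]
    ultimately show ?thesis using resource[OF c, of "x e" "y e"] by simp
  qed
  have sumres: "(\<Sum>e\<in>E. real (x e) * l e (real (x e)) - rR * (real (y e) * l e (real (y e))))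
      \<le> (\<Sum>e\<in>E. rA * (real (x e) * l e (real (x e)) - real (y e) * l e (real (x e) + 1))
        + rB * (pot l e (x e) - pot l e (y e)))"
    by (rule sum_mono) (rule res)
  have sc0: "social_cost n l S0 = (\<Sum>e\<in>E. real (x e) * l e (real (x e)))"
    unfolding x_def by (rule social_cost_res[OF finE PS_sub[OF S0(1)]])
  have sc1: "social_cost n l Sopt = (\<Sum>e\<in>E. real (y e) * l e (real (y e)))"
    unfolding y_def by (rule social_cost_res[OF finE PS_sub[OF Sopt(1)]])
  have ph: "Phi n E l S0 = (\<Sum>e\<in>E. pot l e (x e))" "Phi n E l Sopt = (\<Sum>e\<in>E. pot l e (y e))"
    unfolding Phi_def x_def y_def by auto
  have main: "social_cost n l S0 - rR * social_cost n l Sopt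
      \<le> rA * (social_cost n l S0 - (\<Sum>e\<in>E. real (y e) * l e (real (x e) + 1)))
        + rB * (Phi n E l S0 - Phi n E l Sopt)"
  proof -
    have e1: "(\<Sum>e\<in>E. real (x e) * l e (real (x e)) - rR * (real (y e) * l e (real (y e))))
       = (\<Sum>e\<in>E. real (x e) * l e (real (x e))) - rR * (\<Sum>e\<in>E. real (y e) * l e (real (y e)))"
      by (simp add: sum_subtractf sum_distrib_left)
    have e2: "(\<Sum>e\<in>E. rA * (real (x e) * l e (real (x e)) - real (y e) * l e (real (x e) + 1))
        + rB * (pot l e (x e) - pot l e (y e)))
       = rA * ((\<Sum>e\<in>E. real (x e) * l e (real (x e))) - (\<Sum>e\<in>E. real (y e) * l e (real (x e) + 1)))
        + rB * ((\<Sum>e\<in>E. pot l e (x e)) - (\<Sum>e\<in>E. pot l e (y e)))"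
      by (simp add: sum.distrib sum_subtractf sum_distrib_left right_diff_distrib)
    show ?thesis using sumres unfolding sc0 sc1 ph e1 e2 .
  qed
  have "Phi n E l S0 \<le> Phi n E l Sopt" using S0min Sopt(1) by blast
  then have bound: "social_cost n l S0 \<le> rR * opt_cost n Strat l"
  proof -
    have "rA * (social_cost n l S0 - (\<Sum>e\<in>E. real (y e) * l e (real (x e) + 1))) \<le> 0"
      using nash unfolding rA_def by (intro mult_nonneg_nonpos) auto
    moreover have "rB * (Phi n E l S0 - Phi n E l Sopt) \<le> 0"
      using \<open>Phi n E l S0 \<le> Phi n E l Sopt\<close> unfolding rB_def by (intro mult_nonneg_nonpos) auto
    ultimately show ?thesis using main unfolding Sopt(2) by linarith
  qed
  have sc0nn: "0 \<le> social_cost n l S0"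
    unfolding sc0 using lnn by (intro sum_nonneg mult_nonneg_nonneg) auto
  have ratio: "social_cost n l S0 / opt_cost n Strat l \<le> 2.362"
  proof (cases "opt_cost n Strat l > 0")
    case True then show ?thesis using bound unfolding rR_def by (simp add: divide_le_eq)
  next
    case False
    then have "social_cost n l S0 / opt_cost n Strat l \<le> 0"
      using sc0nn by (simp add: divide_nonneg_nonpos)
    moreover have "(2.362::real) = 2362/1000" by simp
    ultimately show ?thesis by linarith
  qed
  define R where "R = {social_cost n l S / opt_cost n Strat l | S. is_PNE n Strat l S}"
  have "R \<subseteq> (\<lambda>S. social_cost n l S / opt_cost n Strat l) ` PS"
  proof
    fix r assume "r \<in> R"
    then obtain S where S: "is_PNE n Strat l S" "r = social_cost n l S / opt_cost n Strat l"
      unfolding R_def by auto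
    then have "restrict S {1..n} \<in> PS" using PS_restrict unfolding is_PNE_def by blast
    then show "r \<in> (\<lambda>S. social_cost n l S / opt_cost n Strat l) ` PS"
      using S(2) social_cost_restrict[of n l S] by (metis image_eqI)
  qed
  then have finR: "finite R" using finPS finite_surj by blast
  have "social_cost n l S0 / opt_cost n Strat l \<in> R" unfolding R_def using S0PNE by blast
  then have "Min R \<le> social_cost n l S0 / opt_cost n Strat l" using finR by simp
  then show ?thesis unfolding PoS_def R_def[symmetric] using ratio by linarith
qed

end
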